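(* Let $W$ be a discrete memoryless channel with finite input alphabet $\mathcal{X}$ and finite output alphabet $\mathcal{Y}$, with reliability function $E(R)$ and with $\vartheta(\rho)$ as defined in the context. Then for every $\rho\ge 1$, $$E(R)\le 2\rho\,\vartheta(\rho)\qquad\text{for all } R>\vartheta(\rho),$$ and if the channel is pairwise reversible, then moreover $E(R)\le\rho\,\vartheta(\rho)$ for all $R>\vartheta(\rho)$.
   Context: $W(y|x)$ are the transition probabilities; $W^{(n)}(\bm{y}|\bm{x})=\prod_{i=1}^n W(y_i|x_i)$. A code of block-length $n$ is a set of $M$ codewords $\bm{x}_1,\ldots,\bm{x}_M\in\mathcal{X}^n$ with rate $R=\frac{1}{n}\log M$ (natural log); a decoder partitions $\mathcal{Y}^n$ into decoding sets $Y_1,\ldots,Y_M$; the error probability for message $m$ is $P_{e|m}=\sum_{\bm{y}\notin Y_m}W^{(n)}(\bm{y}|\bm{x}_m)$ and $P_{e,\max}=\max_m P_{e|m}$. $P^{(n)}_{e,\max}(R)$ is the smallest $P_{e,\max}$ over all codes (and decoders) of length $n$ and rate at least $R$, and the reliability function is $E(R)=\limsup_{n\to\infty}-\frac1n\log P^{(n)}_{e,\max}(R)$ (taken to be $+\infty$ when the error probability can be made zero). State vectors: $\bm{\psi}_x\in\mathbb{R}^{|\mathcal{Y}|}$ with $\bm{\psi}_x(y)=\sqrt{W(y|x)}$, so $\langle\bm{\psi}_x,\bm{\psi}_{x'}\rangle=\sum_y\sqrt{W(y|x)W(y|x')}$. For $\rho\ge1$, an orthonormal representation of degree $\rho$ is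 a family $\{\tilde{\bm{\psi}}_x\}_{x\in\mathcal{X}}$ of unit-norm vectors in some Hilbert space with $|\langle\tilde{\bm{\psi}}_x,\tilde{\bm{\psi}}_{x'}\rangle|\le(\langle\bm{\psi}_x,\bm{\psi}_{x'}\rangle)^{1/\rho}$ for all $x,x'$; $\Gamma(\rho)$ is the set of all such representations; $V(\{\tilde{\bm{\psi}}_x\})=\min_{\bm{f}}\max_x\log\frac{1}{|\langle\tilde{\bm{\psi}}_x,\bm{f}\rangle|^2}$ over unit vectors $\bm{f}$; and $\vartheta(\rho)=\min_{\{\tilde{\bm{\psi}}_x\}\in\Gamma(\rho)}V(\{\tilde{\bm{\psi}}_x\})$. The channel is called pairwise reversible if for every pair of inputs $x,x'$ the function $s\mapsto\sum_y W(y|x)^{1-s}W(y|x')^{s}$ on $[0,1]$ attains its minimum at $s=1/2$. *)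

theory Defs
  imports "HOL-Analysis.Analysis"
begin

text \<open>Channel: W x y stands for the transition probability W(y|x).\<close>

definition channel :: "('x::finite \<Rightarrow> 'y::finite \<Rightarrow> real) \<Rightarrow> bool" where
  "channel W \<longleftrightarrow> (\<forall>x y. 0 \<le> W x y) \<and> (\<forall>x. (\<Sum>y\<in>UNIV. W x y) = 1)"

definition Wn :: "('x \<Rightarrow> 'y \<Rightarrow> real) \<Rightarrow> 'x list \<Rightarrow> 'y list \<Rightarrow> real" where
  "Wn W xs ys = (\<Prod>i<length xs. W (xs ! i) (ys ! i))"

text \<open>A code of block length n with M messages: codewords c 0, ..., c (M-1) of length n,
  and a decoder dec mapping each output sequence of length n to a message in {0..<M}
  (i.e. the decoding sets Y_m = dec^-1(m) partition Y^n).\<close>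
definition is_code :: "nat \<Rightarrow> nat \<Rightarrow> (nat \<Rightarrow> 'x list) \<Rightarrow> ('y list \<Rightarrow> nat) \<Rightarrow> bool" where
  "is_code n M c dec \<longleftrightarrow> 1 \<le> M \<and> (\<forall>m<M. length (c m) = n) \<and>
     (\<forall>ys. length ys = n \<longrightarrow> dec ys < M)"

definition err_prob :: "('x \<Rightarrow> 'y::finite \<Rightarrow> real) \<Rightarrow> nat \<Rightarrow> (nat \<Rightarrow> 'x list)
    \<Rightarrow> ('y list \<Rightarrow> nat) \<Rightarrow> nat \<Rightarrow> real" where
  "err_prob W n c dec m = (\<Sum>ys\<in>{ys. length ys = n \<and> dec ys \<noteq> m}. Wn W (c m) ys)"

definition err_max :: "('x \<Rightarrow> 'y::finite \<Rightarrow> real) \<Rightarrow> nat \<Rightarrow> nat \<Rightarrow> (nat \<Rightarrow> 'x list)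
    \<Rightarrow> ('y list \<Rightarrow> nat) \<Rightarrow> real" where
  "err_max W n M c dec = Max ((\<lambda>m. err_prob W n c dec m) ` {..<M})"

definition opt_err :: "('x \<Rightarrow> 'y::finite \<Rightarrow> real) \<Rightarrow> nat \<Rightarrow> real \<Rightarrow> real" where
  "opt_err W n R = Inf {err_max W n M c dec | M c dec.
       is_code n M c dec \<and> ln (real M) / real n \<ge> R}"

definition reliability :: "('x \<Rightarrow> 'y::finite \<Rightarrow> real) \<Rightarrow> real \<Rightarrow> ereal" where
  "reliability W R = limsup (\<lambda>n. if opt_err W n R = 0 then \<infinity>
       else ereal (- ln (opt_err W n R) / real n))"

text \<open>Inner products of the state vectors psi_x(y) = sqrt(W(y|x)).\<close>
definition bhatt :: "('x \<Rightarrow> 'y::finite \<Rightarrow> real) \<Rightarrow> 'x \<Rightarrow> 'x \<Rightarrow> real" where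
  "bhatt W x x' = (\<Sum>y\<in>UNIV. sqrt (W x y * W x' y))"

text \<open>Complex Hilbert space C^|X| (coordinates indexed by the input alphabet).\<close>
definition cinner :: "('i::finite \<Rightarrow> complex) \<Rightarrow> ('i \<Rightarrow> complex) \<Rightarrow> complex" where
  "cinner u v = (\<Sum>i\<in>UNIV. cnj (u i) * v i)"

definition unit_vec :: "('i::finite \<Rightarrow> complex) \<Rightarrow> bool" where
  "unit_vec u \<longleftrightarrow> (\<Sum>i\<in>UNIV. (cmod (u i))\<^sup>2) = 1"

definition orth_rep :: "('x::finite \<Rightarrow> 'y::finite \<Rightarrow> real) \<Rightarrow> real \<Rightarrow> ('x \<Rightarrow> 'x \<Rightarrow> complex) \<Rightarrow> bool" where
  "orth_rep W \<rho> \<psi> \<longleftrightarrow> (\<forall>x. unit_vec (\<psi> x)) \<and>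
     (\<forall>x x'. cmod (cinner (\<psi> x) (\<psi> x')) \<le> bhatt W x x' powr (1 / \<rho>))"

definition log_inv :: "real \<Rightarrow> ereal" where
  "log_inv t = (if t = 0 then \<infinity> else ereal (ln (1 / t)))"

definition Vval :: "('x::finite \<Rightarrow> 'x \<Rightarrow> complex) \<Rightarrow> ereal" where
  "Vval \<psi> = (INF f\<in>{f. unit_vec f}. SUP x. log_inv ((cmod (cinner (\<psi> x) f))\<^sup>2))"

definition theta :: "('x::finite \<Rightarrow> 'y::finite \<Rightarrow> real) \<Rightarrow> real \<Rightarrow> ereal" where
  "theta W \<rho> = (INF \<psi>\<in>{\<psi>. orth_rep W \<rho> \<psi>}. Vval \<psi>)"

definition chernoff :: "('x \<Rightarrow> 'y::finite \<Rightarrow> real) \<Rightarrow> 'x \<Rightarrow> 'x \<Rightarrow> real \<Rightarrow> real" where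
  "chernoff W x x' s = (\<Sum>y\<in>UNIV. W x y powr (1 - s) * W x' y powr s)"

definition pairwise_reversible :: "('x \<Rightarrow> 'y::finite \<Rightarrow> real) \<Rightarrow> bool" where
  "pairwise_reversible W \<longleftrightarrow>
     (\<forall>x x'. \<forall>s\<in>{0..1}. chernoff W x x' (1/2) \<le> chernoff W x x' s)"

end

theory Submission
  imports Defs
begin


definition Lst :: "nat \<Rightarrow> 'a list set" where "Lst n = {ys. length ys = n}"

lemma finite_Lst[simp]: "finite (Lst n :: ('a::finite) list set)"
proof -
  have "Lst n = {xs. set xs \<subseteq> (UNIV::'a set) \<and> length xs = n}" by (auto simp: Lst_def)
  then show ?thesis using finite_lists_length_eq[of "UNIV::'a set" n] by simp
qed

lemma Lst_Suc: "Lst (Suc n) = (\<lambda>(y,ys). y#ys) ` (UNIV \<times> Lst n)"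
  by (auto simp: Lst_def length_Suc_conv)

lemma Lst_0[simp]: "Lst 0 = {[]}" by (auto simp: Lst_def)

lemma sum_Lst_Suc:
  fixes g :: "('a::finite) list \<Rightarrow> 'b::comm_monoid_add"
  shows "(\<Sum>ys\<in>Lst (Suc n). g ys) = (\<Sum>y\<in>UNIV. \<Sum>ys\<in>Lst n. g (y#ys))"
proof -
  have inj: "inj_on (\<lambda>(y,ys). y#ys) (UNIV \<times> Lst n)" by (auto simp: inj_on_def)
  have "(\<Sum>ys\<in>Lst (Suc n). g ys) = (\<Sum>p\<in>UNIV \<times> Lst n. g ((\<lambda>(y,ys). y#ys) p))"
    unfolding Lst_Suc by (rule sum.reindex[OF inj, unfolded comp_def])
  also have "\<dots> = (\<Sum>y\<in>UNIV. \<Sum>ys\<in>Lst n. g (y#ys))"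
    by (simp add: sum.cartesian_product case_prod_unfold)
  finally show ?thesis .
qed

lemma sum_prod_lists:
  fixes F :: "'p \<Rightarrow> ('a::finite) \<Rightarrow> 'b::comm_semiring_1"
  shows "(\<Sum>ys\<in>Lst (length ps). \<Prod>i<length ps. F (ps!i) (ys!i)) = (\<Prod>i<length ps. \<Sum>y\<in>UNIV. F (ps!i) y)"
proof (induction ps)
  case Nil
  then show ?case by simp
next
  case (Cons p ps)
  have "(\<Sum>ys\<in>Lst (length (p#ps)). \<Prod>i<length (p#ps). F ((p#ps)!i) (ys!i))
      = (\<Sum>y\<in>UNIV. \<Sum>ys\<in>Lst (length ps). F p y * (\<Prod>i<length ps. F (ps!i) (ys!i)))"
    by (simp only: length_Cons sum_Lst_Suc prod.lessThan_Suc_shift nth_Cons_0 nth_Cons_Suc)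
  also have "\<dots> = (\<Sum>y\<in>UNIV. F p y) * (\<Sum>ys\<in>Lst (length ps). (\<Prod>i<length ps. F (ps!i) (ys!i)))"
    by (simp add: sum_product)
  also have "\<dots> = (\<Prod>i<length (p#ps). \<Sum>y\<in>UNIV. F ((p#ps)!i) y)"
    using Cons by (simp only: length_Cons prod.lessThan_Suc_shift nth_Cons_0 nth_Cons_Suc)
  finally show ?case .
qed



definition tens :: "('x \<Rightarrow> 'z \<Rightarrow> complex) \<Rightarrow> 'x list \<Rightarrow> 'z list \<Rightarrow> complex" where
  "tens \<psi> xs zs = (\<Prod>i<length xs. \<psi> (xs!i) (zs!i))"

definition linner :: "nat \<Rightarrow> (('z::finite) list \<Rightarrow> complex) \<Rightarrow> ('z list \<Rightarrow> complex) \<Rightarrow> complex" where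
  "linner n u v = (\<Sum>zs\<in>Lst n. cnj (u zs) * v zs)"

lemma tens_inner:
  assumes "length xs = n" "length xs' = n"
  shows "linner n (tens \<psi> xs) (tens \<phi> xs') = (\<Prod>i<n. cinner (\<psi> (xs!i)) (\<phi> (xs'!i)))"
proof -
  let ?ps = "zip xs xs'"
  have l: "length ?ps = n" using assms by simp
  have "linner n (tens \<psi> xs) (tens \<phi> xs') =
     (\<Sum>zs\<in>Lst (length ?ps). \<Prod>i<length ?ps. (\<lambda>(a,b) z. cnj (\<psi> a z) * \<phi> b z) (?ps!i) (zs!i))"
    unfolding linner_def tens_def l using assms
    by (intro sum.cong refl) (simp add: cnj_prod prod.distrib[symmetric])
  also have "\<dots> = (\<Prod>i<length ?ps. \<Sum>z\<in>UNIV. (\<lambda>(a,b) z. cnj (\<psi> a z) * \<phi> b z) (?ps!i) z)"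
    by (rule sum_prod_lists)
  also have "\<dots> = (\<Prod>i<n. cinner (\<psi> (xs!i)) (\<phi> (xs'!i)))"
    unfolding l using assms by (intro prod.cong refl) (simp add: cinner_def)
  finally show ?thesis .
qed

lemma cs_complex:
  fixes u v :: "'a \<Rightarrow> complex"
  shows "(cmod (\<Sum>z\<in>Z. cnj (u z) * v z))\<^sup>2 \<le> (\<Sum>z\<in>Z. (cmod (u z))\<^sup>2) * (\<Sum>z\<in>Z. (cmod (v z))\<^sup>2)"
proof -
  have "cmod (\<Sum>z\<in>Z. cnj (u z) * v z) \<le> (\<Sum>z\<in>Z. cmod (u z) * cmod (v z))"
    by (rule order.trans[OF norm_sum]) (simp add: norm_mult)
  then have "(cmod (\<Sum>z\<in>Z. cnj (u z) * v z))\<^sup>2 \<le> (\<Sum>z\<in>Z. cmod (u z) * cmod (v z))\<^sup>2"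
    by (simp add: power_mono)
  also have "\<dots> \<le> (\<Sum>z\<in>Z. (cmod (u z))\<^sup>2) * (\<Sum>z\<in>Z. (cmod (v z))\<^sup>2)"
    by (rule Cauchy_Schwarz_ineq_sum)
  finally show ?thesis .
qed



lemma cnj_self: "cnj z * z = complex_of_real ((cmod z)\<^sup>2)"
  by (metis complex_norm_square mult.commute)

lemma unit_cinner_self: "unit_vec u \<Longrightarrow> cinner u u = 1"
proof -
  assume "unit_vec u"
  have "cinner u u = (\<Sum>i\<in>UNIV. complex_of_real ((cmod (u i))\<^sup>2))"
    unfolding cinner_def by (intro sum.cong refl) (rule cnj_self)
  also have "\<dots> = 1" using \<open>unit_vec u\<close> unfolding unit_vec_def of_real_sum[symmetric] by simp
  finally show ?thesis .
qed

lemma pair_exists: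
  fixes \<psi> :: "'x::finite \<Rightarrow> 'x \<Rightarrow> complex" and f :: "'x \<Rightarrow> complex" and c :: "nat \<Rightarrow> 'x list"
  assumes unit: "\<And>x. unit_vec (\<psi> x)" and uf: "unit_vec f"
    and ga: "\<And>x. a \<le> (cmod (cinner (\<psi> x) f))\<^sup>2" and apos: "0 < a"
    and len: "\<And>m. m < M \<Longrightarrow> length (c m) = n"
    and big: "2 \<le> real M * a^n"
  shows "\<exists>m<M. \<exists>m'<M. m \<noteq> m' \<and> a^n/2 \<le> cmod (\<Prod>i<n. cinner (\<psi> (c m ! i)) (\<psi> (c m' ! i)))"
proof (rule ccontr)
  assume H: "\<not> ?thesis"
  define G where "G m m' = (\<Prod>i<n. cinner (\<psi> (c m ! i)) (\<psi> (c m' ! i)))" for m m'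
  define g where "g m = (\<Prod>i<n. cinner (\<psi> (c m ! i)) f)" for m
  define T where "T m = tens \<psi> (c m)" for m
  define F where "F = tens (\<lambda>_. f) (replicate n (undefined::'x))"
  have GT: "linner n (T m) (T m') = G m m'" if "m<M" "m'<M" for m m'
    unfolding T_def G_def using tens_inner len that by blast
  have gT: "linner n (T m) F = g m" if "m<M" for m
    unfolding T_def g_def F_def using tens_inner[of "c m" n "replicate n undefined" \<psi> "\<lambda>_. f"] len that
    by simp
  have FF: "(\<Sum>zs\<in>Lst n. (cmod (F zs))\<^sup>2) = 1"
  proof -
    have "(\<Sum>zs\<in>Lst n. (cmod (F zs))\<^sup>2) =
      (\<Sum>zs\<in>Lst (length (replicate n (undefined::'x))). \<Prod>i<length (replicate n (undefined::'x)).
          (\<lambda>_ z. (cmod (f z))\<^sup>2) ((replicate n undefined)!i) (zs!i))"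
      unfolding F_def tens_def by (simp add: prod_norm[symmetric] prod_power_distrib)
    also have "\<dots> = (\<Prod>i<length (replicate n (undefined::'x)). \<Sum>z\<in>UNIV. 
          (\<lambda>_ z. (cmod (f z))\<^sup>2) ((replicate n undefined)!i) z)"
      by (rule sum_prod_lists)
    also have "\<dots> = 1" using uf by (simp add: unit_vec_def)
    finally show ?thesis .
  qed
  have Gdiag: "cmod (G m m) = 1" for m
    unfolding G_def by (simp add: prod_norm[symmetric] unit_cinner_self unit)
  have gbound: "sqrt a ^ n \<le> cmod (g m)" for m
  proof -
    have "sqrt a \<le> cmod (cinner (\<psi> x) f)" for x
      using real_sqrt_le_mono[OF ga[of x]] by simp
    then have "(\<Prod>i<n. sqrt a) \<le> (\<Prod>i<n. cmod (cinner (\<psi> (c m ! i)) f))"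
      by (intro prod_mono) (auto simp: apos less_imp_le)
    then show ?thesis unfolding g_def by (simp add: prod_norm[symmetric])
  qed
  define \<beta> where "\<beta> m = sgn (g m)" for m
  have \<beta>g: "cnj (\<beta> m) * g m = of_real (cmod (g m))" for m
  proof (cases "g m = 0")
    case False
    have "cnj (\<beta> m) * g m = of_real (1 / cmod (g m)) * (cnj (g m) * g m)"
      by (simp add: \<beta>_def sgn_div_norm scaleR_conv_of_real mult_ac divide_inverse)
    also have "\<dots> = of_real (1/cmod(g m) * (cmod (g m))\<^sup>2)" by (simp only: cnj_self of_real_mult)
    also have "\<dots> = of_real (cmod (g m))" using False by (simp add: power2_eq_square)
    finally show ?thesis .
  qed (simp add: \<beta>_def)
  have \<beta>le: "cmod (\<beta> m) \<le> 1" for m unfolding \<beta>_def by (simp add: norm_sgn)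
  define u where "u zs = (\<Sum>m<M. \<beta> m * T m zs)" for zs
  have uF: "linner n u F = of_real (\<Sum>m<M. cmod (g m))"
  proof -
    have "linner n u F = (\<Sum>m<M. cnj (\<beta> m) * linner n (T m) F)"
      unfolding linner_def u_def cnj_sum sum_distrib_right sum_distrib_left
      by (subst sum.swap) (simp add: mult.assoc)
    also have "\<dots> = (\<Sum>m<M. of_real (cmod (g m)))" using gT \<beta>g by simp
    finally show ?thesis by simp
  qed
  have uu: "of_real (\<Sum>zs\<in>Lst n. (cmod (u zs))\<^sup>2) = (\<Sum>m<M. \<Sum>m'<M. cnj (\<beta> m) * \<beta> m' * G m m')"
  proof -
    have "of_real (\<Sum>zs\<in>Lst n. (cmod (u zs))\<^sup>2) = linner n u u"
      unfolding linner_def of_real_sum by (intro sum.cong refl) (simp only: cnj_self)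
    also have "\<dots> = (\<Sum>m<M. \<Sum>m'<M. cnj (\<beta> m) * \<beta> m' * linner n (T m) (T m'))"
    proof -
      have e1: "cnj (u zs) * u zs = (\<Sum>m<M. \<Sum>m'<M. cnj (\<beta> m) * \<beta> m' * (cnj (T m zs) * T m' zs))" for zs
        unfolding u_def cnj_sum sum_product by (simp add: mult_ac)
      have "linner n u u = (\<Sum>zs\<in>Lst n. \<Sum>m<M. \<Sum>m'<M. cnj (\<beta> m) * \<beta> m' * (cnj (T m zs) * T m' zs))"
        unfolding linner_def e1 ..
      also have "\<dots> = (\<Sum>m<M. \<Sum>zs\<in>Lst n. \<Sum>m'<M. cnj (\<beta> m) * \<beta> m' * (cnj (T m zs) * T m' zs))"
        by (rule sum.swap)
      also have "\<dots> = (\<Sum>m<M. \<Sum>m'<M. \<Sum>zs\<in>Lst n. cnj (\<beta> m) * \<beta> m' * (cnj (T m zs) * T m' zs))"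
        by (rule sum.cong[OF refl], rule sum.swap)
      also have "\<dots> = (\<Sum>m<M. \<Sum>m'<M. cnj (\<beta> m) * \<beta> m' * linner n (T m) (T m'))"
        unfolding linner_def by (simp add: sum_distrib_left)
      finally show ?thesis .
    qed
    also have "\<dots> = (\<Sum>m<M. \<Sum>m'<M. cnj (\<beta> m) * \<beta> m' * G m m')" using GT by simp
    finally show ?thesis .
  qed
  have uG: "(\<Sum>zs\<in>Lst n. (cmod (u zs))\<^sup>2) \<le> (\<Sum>m<M. \<Sum>m'<M. cmod (G m m'))"
  proof -
    have nn: "0 \<le> (\<Sum>zs\<in>Lst n. (cmod (u zs))\<^sup>2)" by (simp add: sum_nonneg)
    have "(\<Sum>zs\<in>Lst n. (cmod (u zs))\<^sup>2) = cmod (of_real (\<Sum>zs\<in>Lst n. (cmod (u zs))\<^sup>2))"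
      by (subst norm_of_real) (use nn in simp)
    also have "\<dots> = cmod (\<Sum>m<M. \<Sum>m'<M. cnj (\<beta> m) * \<beta> m' * G m m')" using uu by simp
    also have "\<dots> \<le> (\<Sum>m<M. cmod (\<Sum>m'<M. cnj (\<beta> m) * \<beta> m' * G m m'))" by (rule norm_sum)
    also have "\<dots> \<le> (\<Sum>m<M. \<Sum>m'<M. cmod (cnj (\<beta> m) * \<beta> m' * G m m'))"
      by (intro sum_mono norm_sum)
    also have "\<dots> \<le> (\<Sum>m<M. \<Sum>m'<M. cmod (G m m'))"
    proof (intro sum_mono)
      fix m m'
      have "cmod (cnj (\<beta> m) * \<beta> m' * G m m') = cmod (\<beta> m) * cmod (\<beta> m') * cmod (G m m')"
        by (simp add: norm_mult)
      also have "\<dots> \<le> 1 * 1 * cmod (G m m')"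
        by (intro mult_mono \<beta>le) auto
      finally show "cmod (cnj (\<beta> m) * \<beta> m' * G m m') \<le> cmod (G m m')" by simp
    qed
    finally show ?thesis .
  qed
  have CS: "(\<Sum>m<M. cmod (g m))\<^sup>2 \<le> (\<Sum>zs\<in>Lst n. (cmod (u zs))\<^sup>2)"
  proof -
    have s1: "cmod (of_real (\<Sum>m<M. cmod (g m))) = (\<Sum>m<M. cmod (g m))"
      by (subst norm_of_real) (simp add: sum_nonneg)
    have "(cmod (linner n u F))\<^sup>2 \<le> (\<Sum>zs\<in>Lst n. (cmod (u zs))\<^sup>2) * 1"
      using cs_complex[of u F "Lst n"] FF unfolding linner_def by simp
    then show ?thesis unfolding uF s1 by simp
  qed
  have an: "0 < a^n" using apos by simp
  have sqa: "(sqrt a ^ n)\<^sup>2 = a^n" using apos by (simp add: power_mult[symmetric] mult.commute[of n 2] power_mult)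
  have lower: "real M * sqrt a ^ n \<le> (\<Sum>m<M. cmod (g m))"
    using sum_mono[of "{..<M}" "\<lambda>_. sqrt a ^ n" "\<lambda>m. cmod (g m)"] gbound by simp
  have lower2: "(real M)\<^sup>2 * a^n \<le> (\<Sum>m<M. cmod (g m))\<^sup>2"
  proof -
    have "(real M * sqrt a ^ n)\<^sup>2 \<le> (\<Sum>m<M. cmod (g m))\<^sup>2"
      using lower apos by (intro power_mono) auto
    then show ?thesis by (simp add: power_mult_distrib sqa)
  qed
  have off: "cmod (G m m') \<le> a^n/2" if "m<M" "m'<M" "m\<noteq>m'" for m m'
    using H that unfolding G_def by force
  have Mpos: "1 \<le> M" using big an by (cases M) auto
  have row: "(\<Sum>m'<M. cmod (G m m')) \<le> 1 + (real M - 1) * (a^n/2)" if "m<M" for m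
  proof -
    have "(\<Sum>m'<M. cmod (G m m')) = cmod (G m m) + (\<Sum>m'\<in>{..<M}-{m}. cmod (G m m'))"
      using that by (subst sum.remove[of _ m]) auto
    also have "\<dots> \<le> 1 + (\<Sum>m'\<in>{..<M}-{m}. a^n/2)"
      using off that Gdiag by (intro add_mono sum_mono) auto
    also have "\<dots> = 1 + (real M - 1) * (a^n/2)" using that Mpos by (simp add: of_nat_diff)
    finally show ?thesis .
  qed
  have "(\<Sum>m<M. \<Sum>m'<M. cmod (G m m')) \<le> real M * (1 + (real M - 1) * (a^n/2))"
    using sum_mono[of "{..<M}" "\<lambda>m. \<Sum>m'<M. cmod (G m m')" "\<lambda>_. 1 + (real M - 1) * (a^n/2)"] row
    by simp
  also have "\<dots> < (real M)\<^sup>2 * a^n"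
  proof -
    have "1 + (real M - 1) * (a^n/2) = 1 + (real M * a^n)/2 - a^n/2" by (simp add: field_simps)
    then have "1 + (real M - 1) * (a^n/2) < real M * a^n" using big an by linarith
    then have "real M * (1 + (real M - 1) * (a^n/2)) < real M * (real M * a^n)"
      using Mpos by (intro mult_strict_left_mono) auto
    then show ?thesis by (simp add: power2_eq_square mult.assoc)
  qed
  finally show False using lower2 CS uG by linarith
qed



definition prodL :: "('p \<Rightarrow> 'y \<Rightarrow> real) \<Rightarrow> 'p list \<Rightarrow> 'y list \<Rightarrow> real" where
  "prodL q ps ys = (\<Prod>i<length ps. q (ps!i) (ys!i))"
definition sumL :: "('p \<Rightarrow> 'y \<Rightarrow> real) \<Rightarrow> 'p list \<Rightarrow> 'y list \<Rightarrow> real" where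
  "sumL l ps ys = (\<Sum>i<length ps. l (ps!i) (ys!i))"

lemma prodL_Cons[simp]: "prodL q (p#ps) (y#ys) = q p y * prodL q ps ys"
  unfolding prodL_def by (simp only: length_Cons prod.lessThan_Suc_shift nth_Cons_0 nth_Cons_Suc)
lemma sumL_Cons[simp]: "sumL l (p#ps) (y#ys) = l p y + sumL l ps ys"
  unfolding sumL_def by (simp only: length_Cons sum.lessThan_Suc_shift nth_Cons_0 nth_Cons_Suc)
lemma prodL_Nil[simp]: "prodL q [] ys = 1" by (simp add: prodL_def)
lemma sumL_Nil[simp]: "sumL l [] ys = 0" by (simp add: sumL_def)

lemma sum_prodL:
  fixes q :: "'p \<Rightarrow> ('y::finite) \<Rightarrow> real"
  assumes "\<And>p. p \<in> set ps \<Longrightarrow> (\<Sum>y\<in>UNIV. q p y) = 1"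
  shows "(\<Sum>ys\<in>Lst (length ps). prodL q ps ys) = 1"
  unfolding prodL_def sum_prod_lists using assms by (intro prod.neutral) auto

lemma var_lemma:
  fixes q l :: "'p \<Rightarrow> ('y::finite) \<Rightarrow> real"
  assumes q1: "\<And>p. p \<in> set ps \<Longrightarrow> (\<Sum>y\<in>UNIV. q p y) = 1"
    and q0: "\<And>p. p \<in> set ps \<Longrightarrow> (\<Sum>y\<in>UNIV. q p y * l p y) = 0"
  shows "(\<Sum>ys\<in>Lst (length ps). prodL q ps ys * sumL l ps ys) = 0 \<and>
         (\<Sum>ys\<in>Lst (length ps). prodL q ps ys * (sumL l ps ys)\<^sup>2) =
           (\<Sum>i<length ps. \<Sum>y\<in>UNIV. q (ps!i) y * (l (ps!i) y)\<^sup>2)"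
  using assms
proof (induction ps)
  case Nil
  then show ?case by simp
next
  case (Cons p ps)
  have IH1: "(\<Sum>ys\<in>Lst (length ps). prodL q ps ys * sumL l ps ys) = 0"
    and IH2: "(\<Sum>ys\<in>Lst (length ps). prodL q ps ys * (sumL l ps ys)\<^sup>2) =
           (\<Sum>i<length ps. \<Sum>y\<in>UNIV. q (ps!i) y * (l (ps!i) y)\<^sup>2)"
    using Cons by auto
  have S1: "(\<Sum>ys\<in>Lst (length ps). prodL q ps ys) = 1"
    using Cons.prems by (intro sum_prodL) auto
  have a1: "(\<Sum>y\<in>UNIV. q p y) = 1" and a0: "(\<Sum>y\<in>UNIV. q p y * l p y) = 0"
    using Cons.prems by auto
  have first: "(\<Sum>ys\<in>Lst (length (p#ps)). prodL q (p#ps) ys * sumL l (p#ps) ys) = 0"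
  proof -
    have "(\<Sum>ys\<in>Lst (length (p#ps)). prodL q (p#ps) ys * sumL l (p#ps) ys)
        = (\<Sum>y\<in>UNIV. \<Sum>ys\<in>Lst (length ps). q p y * l p y * prodL q ps ys + q p y * (prodL q ps ys * sumL l ps ys))"
      by (simp add: sum_Lst_Suc algebra_simps)
    also have "\<dots> = (\<Sum>y\<in>UNIV. (q p y * l p y) * (\<Sum>ys\<in>Lst (length ps). prodL q ps ys)
        + q p y * (\<Sum>ys\<in>Lst (length ps). prodL q ps ys * sumL l ps ys))"
      by (simp add: sum.distrib sum_distrib_left)
    also have "\<dots> = (\<Sum>y\<in>UNIV. q p y * l p y) * (\<Sum>ys\<in>Lst (length ps). prodL q ps ys)
        + (\<Sum>y\<in>UNIV. q p y) * (\<Sum>ys\<in>Lst (length ps). prodL q ps ys * sumL l ps ys)"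
      by (simp add: sum.distrib sum_distrib_right)
    also have "\<dots> = 0" using a0 IH1 by simp
    finally show ?thesis .
  qed
  have second: "(\<Sum>ys\<in>Lst (length (p#ps)). prodL q (p#ps) ys * (sumL l (p#ps) ys)\<^sup>2)
      = (\<Sum>i<length (p#ps). \<Sum>y\<in>UNIV. q ((p#ps)!i) y * (l ((p#ps)!i) y)\<^sup>2)"
  proof -
    have "(\<Sum>ys\<in>Lst (length (p#ps)). prodL q (p#ps) ys * (sumL l (p#ps) ys)\<^sup>2)
        = (\<Sum>y\<in>UNIV. \<Sum>ys\<in>Lst (length ps). q p y * (l p y)\<^sup>2 * prodL q ps ys
            + 2 * (q p y * l p y) * (prodL q ps ys * sumL l ps ys)
            + q p y * (prodL q ps ys * (sumL l ps ys)\<^sup>2))"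
      by (simp add: sum_Lst_Suc power2_eq_square algebra_simps)
    also have "\<dots> = (\<Sum>y\<in>UNIV. (q p y * (l p y)\<^sup>2) * (\<Sum>ys\<in>Lst (length ps). prodL q ps ys)
        + (2 * (q p y * l p y)) * (\<Sum>ys\<in>Lst (length ps). prodL q ps ys * sumL l ps ys)
        + q p y * (\<Sum>ys\<in>Lst (length ps). prodL q ps ys * (sumL l ps ys)\<^sup>2))"
      by (simp add: sum.distrib sum_distrib_left)
    also have "\<dots> = (\<Sum>y\<in>UNIV. q p y * (l p y)\<^sup>2) * (\<Sum>ys\<in>Lst (length ps). prodL q ps ys)
        + (\<Sum>y\<in>UNIV. 2 * (q p y * l p y)) * (\<Sum>ys\<in>Lst (length ps). prodL q ps ys * sumL l ps ys)
        + (\<Sum>y\<in>UNIV. q p y) * (\<Sum>ys\<in>Lst (length ps). prodL q ps ys * (sumL l ps ys)\<^sup>2)"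
      by (simp only: sum.distrib sum_distrib_right)
    also have "\<dots> = (\<Sum>y\<in>UNIV. q p y * (l p y)\<^sup>2) + (\<Sum>i<length ps. \<Sum>y\<in>UNIV. q (ps!i) y * (l (ps!i) y)\<^sup>2)"
      using a0 a1 S1 IH2 by (simp add: sum_distrib_left[symmetric])
    also have "\<dots> = (\<Sum>i<length (p#ps). \<Sum>y\<in>UNIV. q ((p#ps)!i) y * (l ((p#ps)!i) y)\<^sup>2)"
      by (simp only: length_Cons sum.lessThan_Suc_shift nth_Cons_0 nth_Cons_Suc)
    finally show ?thesis .
  qed
  show ?case using first second by blast
qed



lemma sqrt_prod: "sqrt (prod f A) = (\<Prod>a\<in>A. sqrt (f a))"
  by (induction A rule: infinite_finite_induct) (auto simp: real_sqrt_mult)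

lemma Wn_prodL: "Wn W xs ys = prodL W xs ys" unfolding Wn_def prodL_def ..

lemma Wn_nonneg: "channel W \<Longrightarrow> 0 \<le> Wn W xs ys"
  unfolding Wn_def channel_def by (auto intro: prod_nonneg)

lemma sum_Wn: "channel W \<Longrightarrow> length xs = n \<Longrightarrow> (\<Sum>ys\<in>Lst n. Wn W xs ys) = 1"
  unfolding Wn_prodL by (auto intro!: sum_prodL simp: channel_def)

lemma bhatt_prod:
  assumes "length xs = n" "length xs' = n"
  shows "(\<Sum>ys\<in>Lst n. sqrt (Wn W xs ys * Wn W xs' ys)) = (\<Prod>i<n. bhatt W (xs!i) (xs'!i))"
proof -
  let ?ps = "zip xs xs'"
  have l: "length ?ps = n" using assms by simp
  have "(\<Sum>ys\<in>Lst n. sqrt (Wn W xs ys * Wn W xs' ys)) =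
     (\<Sum>ys\<in>Lst (length ?ps). \<Prod>i<length ?ps. (\<lambda>(a,b) y. sqrt (W a y * W b y)) (?ps!i) (ys!i))"
    unfolding Wn_def l using assms
    by (intro sum.cong refl) (simp add: prod.distrib[symmetric] sqrt_prod)
  also have "\<dots> = (\<Prod>i<length ?ps. \<Sum>y\<in>UNIV. (\<lambda>(a,b) y. sqrt (W a y * W b y)) (?ps!i) y)"
    by (rule sum_prod_lists)
  also have "\<dots> = (\<Prod>i<n. bhatt W (xs!i) (xs'!i))"
    unfolding l using assms by (intro prod.cong refl) (simp add: bhatt_def)
  finally show ?thesis .
qed

lemma cs_real:
  fixes P Q :: "'a \<Rightarrow> real"
  assumes "\<And>a. 0 \<le> P a" "\<And>a. 0 \<le> Q a"
  shows "(\<Sum>a\<in>A. sqrt (P a * Q a)) \<le> sqrt (\<Sum>a\<in>A. P a) * sqrt (\<Sum>a\<in>A. Q a)"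
proof (rule power2_le_imp_le)
  have "(\<Sum>a\<in>A. sqrt (P a * Q a))\<^sup>2 = (\<Sum>a\<in>A. sqrt (P a) * sqrt (Q a))\<^sup>2"
    by (simp add: real_sqrt_mult)
  also have "\<dots> \<le> (\<Sum>a\<in>A. (sqrt (P a))\<^sup>2) * (\<Sum>a\<in>A. (sqrt (Q a))\<^sup>2)"
    by (rule Cauchy_Schwarz_ineq_sum)
  also have "\<dots> = (sqrt (\<Sum>a\<in>A. P a) * sqrt (\<Sum>a\<in>A. Q a))\<^sup>2"
    using assms by (simp add: power_mult_distrib sum_nonneg)
  finally show "(\<Sum>a\<in>A. sqrt (P a * Q a))\<^sup>2 \<le> (sqrt (\<Sum>a\<in>A. P a) * sqrt (\<Sum>a\<in>A. Q a))\<^sup>2" .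
  show "0 \<le> sqrt (\<Sum>a\<in>A. P a) * sqrt (\<Sum>a\<in>A. Q a)"
    using assms by (simp add: sum_nonneg)
qed

lemma err_le_max:
  assumes "is_code n M c dec" "m < M"
  shows "err_prob W n c dec m \<le> err_max W n M c dec"
  unfolding err_max_def using assms by (intro Max_ge) auto

lemma two_point:
  assumes ch: "channel W" and code: "is_code n M c dec" and m: "m < M" "m' < M" "m \<noteq> m'"
  shows "(\<Sum>ys\<in>Lst n. sqrt (Wn W (c m) ys * Wn W (c m') ys))
          \<le> sqrt (err_prob W n c dec m) + sqrt (err_prob W n c dec m')"
proof -
  let ?P = "Wn W (c m)" and ?Q = "Wn W (c m')"
  have lens: "length (c m) = n" "length (c m') = n" using code m unfolding is_code_def by auto
  define A where "A = {ys. length ys = n \<and> dec ys \<noteq> m}"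
  define B where "B = {ys. length ys = n \<and> dec ys = m}"
  define A' where "A' = {ys. length ys = n \<and> dec ys \<noteq> m'}"
  have LAB: "Lst n = A \<union> B" "A \<inter> B = {}" unfolding A_def B_def Lst_def by auto
  have fin: "finite A" "finite B" "finite A'" using finite_Lst[of n] unfolding A_def B_def A'_def Lst_def
    by (auto elim: finite_subset[rotated])
  have BA': "B \<subseteq> A'" unfolding B_def A'_def using m by auto
  have nnP: "\<And>ys. 0 \<le> ?P ys" and nnQ: "\<And>ys. 0 \<le> ?Q ys" using Wn_nonneg[OF ch] by auto
  have sP: "sum ?P S \<le> 1" if "S \<subseteq> Lst n" for S
    using sum_mono2[OF finite_Lst that, of ?P] nnP sum_Wn[OF ch lens(1)] by simp
  have sQ: "sum ?Q S \<le> 1" if "S \<subseteq> Lst n" for S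
    using sum_mono2[OF finite_Lst that, of ?Q] nnQ sum_Wn[OF ch lens(2)] by simp
  have "(\<Sum>ys\<in>Lst n. sqrt (?P ys * ?Q ys)) = (\<Sum>ys\<in>A. sqrt (?P ys * ?Q ys)) + (\<Sum>ys\<in>B. sqrt (?P ys * ?Q ys))"
    unfolding LAB by (rule sum.union_disjoint) (use fin LAB in auto)
  also have "\<dots> \<le> sqrt (sum ?P A) * sqrt (sum ?Q A) + sqrt (sum ?P B) * sqrt (sum ?Q B)"
    by (intro add_mono cs_real nnP nnQ)
  also have "\<dots> \<le> sqrt (sum ?P A) * 1 + 1 * sqrt (sum ?Q A')"
  proof (intro add_mono mult_mono)
    show "sqrt (sum ?Q A) \<le> 1" using sQ[of A] LAB by auto
    show "sqrt (sum ?P B) \<le> 1" using sP[of B] LAB by auto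
    show "sqrt (sum ?Q B) \<le> sqrt (sum ?Q A')"
      using sum_mono2[OF fin(3) BA', of ?Q] nnQ by simp
  qed (auto simp: sum_nonneg nnP nnQ)
  also have "\<dots> = sqrt (err_prob W n c dec m) + sqrt (err_prob W n c dec m')"
    unfolding err_prob_def A_def A'_def by simp
  finally show ?thesis .
qed

lemma two_point_max:
  assumes ch: "channel W" and code: "is_code n M c dec" and m: "m < M" "m' < M" "m \<noteq> m'"
  shows "(\<Sum>ys\<in>Lst n. sqrt (Wn W (c m) ys * Wn W (c m') ys))\<^sup>2 / 4 \<le> err_max W n M c dec"
proof -
  let ?B = "\<Sum>ys\<in>Lst n. sqrt (Wn W (c m) ys * Wn W (c m') ys)"
  have e1: "err_prob W n c dec m \<le> err_max W n M c dec" "err_prob W n c dec m' \<le> err_max W n M c dec"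
    using err_le_max[OF code] m by auto
  have nn: "0 \<le> err_prob W n c dec k" for k
    unfolding err_prob_def using Wn_nonneg[OF ch] by (auto intro: sum_nonneg)
  have "?B \<le> 2 * sqrt (err_max W n M c dec)"
    using two_point[OF assms] real_sqrt_le_mono[OF e1(1)] real_sqrt_le_mono[OF e1(2)] by linarith
  moreover have "0 \<le> ?B" by (intro sum_nonneg real_sqrt_ge_zero mult_nonneg_nonneg Wn_nonneg[OF ch])
  ultimately have "?B\<^sup>2 \<le> (2 * sqrt (err_max W n M c dec))\<^sup>2" by (intro power_mono) auto
  also have "\<dots> = 4 * err_max W n M c dec" using nn[of m] e1 by (simp add: power_mult_distrib)
  finally show ?thesis by simp
qed



lemma reliability_le:
  fixes g :: "nat \<Rightarrow> real"
  assumes bnd: "\<And>n. N \<le> n \<Longrightarrow> 0 < n \<Longrightarrow> exp (-(real n * A + g n)) \<le> opt_err W n R"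
      and lim: "(\<lambda>n. g n / real n) \<longlonglongrightarrow> 0"
  shows "reliability W R \<le> ereal A"
proof -
  let ?h = "\<lambda>n. if opt_err W n R = 0 then \<infinity> else ereal (- ln (opt_err W n R) / real n)"
  have ev: "eventually (\<lambda>n. ?h n \<le> ereal (A + g n / real n)) sequentially"
    unfolding eventually_sequentially
  proof (intro exI[of _ "max N 1"] allI impI)
    fix n assume n: "max N 1 \<le> n"
    then have n0: "0 < n" "N \<le> n" by auto
    have b: "exp (-(real n * A + g n)) \<le> opt_err W n R" using bnd n0 by auto
    have pos: "0 < opt_err W n R" using b by (meson exp_gt_zero less_le_trans)
    have "-(real n * A + g n) \<le> ln (opt_err W n R)"
      using ln_le_cancel_iff[of "exp (-(real n * A + g n))" "opt_err W n R"] b pos by simp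
    then have "- ln (opt_err W n R) / real n \<le> (real n * A + g n) / real n"
      using n0 by (intro divide_right_mono) auto
    also have "\<dots> = A + g n / real n" using n0 by (simp add: field_simps)
    finally show "?h n \<le> ereal (A + g n / real n)" using pos by simp
  qed
  have "reliability W R = limsup ?h" unfolding reliability_def ..
  also have "\<dots> \<le> limsup (\<lambda>n. ereal (A + g n / real n))" by (rule Limsup_mono[OF ev])
  also have "\<dots> = ereal A"
  proof (rule lim_imp_Limsup)
    show "\<not> trivial_limit (sequentially :: nat filter)" by simp
    have "(\<lambda>n. A + g n / real n) \<longlonglongrightarrow> A + 0" by (intro tendsto_add tendsto_const lim)
    then show "(\<lambda>n. ereal (A + g n / real n)) \<longlonglongrightarrow> ereal A" by simp
  qed
  finally show ?thesis .
qed

lemma opt_err_ge: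
  assumes n: "0 < n"
    and H: "\<And>M c dec. is_code n M c dec \<Longrightarrow> R \<le> ln (real M) / real n \<Longrightarrow> L \<le> err_max W n M c dec"
  shows "L \<le> opt_err W n R"
  unfolding opt_err_def
proof (rule cInf_greatest)
  define M0 where "M0 = nat \<lceil>exp (real n * R)\<rceil> + 1"
  have M0ge: "exp (real n * R) \<le> real M0" unfolding M0_def by linarith
  have "real n * R \<le> ln (real M0)"
    using M0ge by (metis exp_gt_zero ln_exp ln_le_cancel_iff order_less_le_trans)
  then have rate: "R \<le> ln (real M0) / real n" using n by (simp add: field_simps)
  have code: "is_code n M0 (\<lambda>_. replicate n undefined) (\<lambda>_. 0)"
    unfolding is_code_def M0_def by auto
  show "{err_max W n M c dec |M c dec. is_code n M c dec \<and> R \<le> ln (real M) / real n} \<noteq> {}"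
    using code rate by blast
qed (use H in blast)

lemma rate_M:
  assumes "is_code n M c dec" "0 < n" "R \<le> ln (real M) / real n"
  shows "exp (real n * R) \<le> real M"
proof -
  have M: "0 < real M" using assms(1) unfolding is_code_def by auto
  have "real n * R \<le> ln (real M)" using assms(2,3) by (simp add: field_simps)
  then show ?thesis using M by (metis exp_le_cancel_iff exp_ln)
qed

lemma code_bound1:
  fixes \<psi> :: "'x::finite \<Rightarrow> 'x \<Rightarrow> complex" and W :: "'x \<Rightarrow> 'y::finite \<Rightarrow> real"
  assumes ch: "channel W" and rho: "1 \<le> \<rho>" and orth: "orth_rep W \<rho> \<psi>" and uf: "unit_vec f"
    and ga: "\<And>x. exp (-V) \<le> (cmod (cinner (\<psi> x) f))\<^sup>2"
    and code: "is_code n M c dec" and big: "2 \<le> real M * exp (-V) ^ n"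
  shows "\<exists>m<M. \<exists>m'<M. m \<noteq> m' \<and>
     (exp (-V) ^ n / 2) powr \<rho> \<le> (\<Sum>ys\<in>Lst n. sqrt (Wn W (c m) ys * Wn W (c m') ys))"
proof -
  have len: "\<And>m. m < M \<Longrightarrow> length (c m) = n" using code unfolding is_code_def by auto
  obtain m m' where mm: "m < M" "m' < M" "m \<noteq> m'"
    and G: "exp (-V) ^ n / 2 \<le> cmod (\<Prod>i<n. cinner (\<psi> (c m ! i)) (\<psi> (c m' ! i)))"
    using pair_exists[of \<psi> f "exp (-V)" M c n] orth uf ga big len unfolding orth_rep_def by auto
  have bn: "0 \<le> bhatt W x x'" for x x'
    using ch unfolding bhatt_def channel_def by (auto intro!: sum_nonneg)
  have "cmod (\<Prod>i<n. cinner (\<psi> (c m ! i)) (\<psi> (c m' ! i)))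
        = (\<Prod>i<n. cmod (cinner (\<psi> (c m ! i)) (\<psi> (c m' ! i))))" by (simp add: prod_norm)
  also have "\<dots> \<le> (\<Prod>i<n. bhatt W (c m ! i) (c m' ! i) powr (1/\<rho>))"
    using orth unfolding orth_rep_def by (intro prod_mono) auto
  also have "\<dots> = (\<Prod>i<n. bhatt W (c m ! i) (c m' ! i)) powr (1/\<rho>)"
    using bn by (simp add: prod_powr_distrib)
  also have "\<dots> = (\<Sum>ys\<in>Lst n. sqrt (Wn W (c m) ys * Wn W (c m') ys)) powr (1/\<rho>)"
    by (subst bhatt_prod[OF len[OF mm(1)] len[OF mm(2)], of W]) (rule refl)
  finally have G2: "exp (-V) ^ n / 2 \<le> (\<Sum>ys\<in>Lst n. sqrt (Wn W (c m) ys * Wn W (c m') ys)) powr (1/\<rho>)"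
    using G by linarith
  have Bnn: "0 \<le> (\<Sum>ys\<in>Lst n. sqrt (Wn W (c m) ys * Wn W (c m') ys))"
    by (intro sum_nonneg real_sqrt_ge_zero mult_nonneg_nonneg Wn_nonneg[OF ch])
  have "(exp (-V) ^ n / 2) powr \<rho> \<le> ((\<Sum>ys\<in>Lst n. sqrt (Wn W (c m) ys * Wn W (c m') ys)) powr (1/\<rho>)) powr \<rho>"
    using G2 rho by (intro powr_mono2) auto
  also have "\<dots> = (\<Sum>ys\<in>Lst n. sqrt (Wn W (c m) ys * Wn W (c m') ys))"
    using rho Bnn by (simp add: powr_powr powr_one)
  finally show ?thesis using mm by blast
qed



lemma big_from_rate:
  assumes "is_code n M c dec" "0 < n" "R \<le> ln (real M) / real n" "V < R"
    and "nat \<lceil>ln 2 / (R - V)\<rceil> \<le> n"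
  shows "2 \<le> real M * exp (-V) ^ n"
proof -
  have M: "exp (real n * R) \<le> real M" using rate_M assms(1-3) by blast
  have "ln 2 / (R - V) \<le> real n" using assms(5) by linarith
  then have "ln 2 \<le> real n * (R - V)" using assms(4) by (simp add: field_simps)
  then have "2 \<le> exp (real n * (R - V))" by (metis exp_le_cancel_iff exp_ln zero_less_numeral)
  also have "\<dots> = exp (real n * R) * exp (-V) ^ n"
    by (simp add: exp_of_nat_mult[symmetric] exp_add[symmetric] algebra_simps)
  also have "\<dots> \<le> real M * exp (-V) ^ n" using M by (intro mult_right_mono) auto
  finally show ?thesis .
qed

lemma powr_form: "(exp (-V) ^ n / 2) powr \<rho> = exp (-(\<rho> * real n * V) - \<rho> * ln 2)"
proof -
  have "exp (-V) ^ n / 2 = exp (-(real n * V) - ln 2)"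
    by (simp add: exp_diff exp_of_nat_mult[symmetric])
  then show ?thesis by (simp add: exp_powr_real algebra_simps)
qed

lemma claim1_rep:
  fixes \<psi> :: "'x::finite \<Rightarrow> 'x \<Rightarrow> complex" and W :: "'x \<Rightarrow> 'y::finite \<Rightarrow> real"
  assumes ch: "channel W" and rho: "1 \<le> \<rho>" and orth: "orth_rep W \<rho> \<psi>" and uf: "unit_vec f"
    and ga: "\<And>x. exp (-V) \<le> (cmod (cinner (\<psi> x) f))\<^sup>2" and VR: "V < R"
  shows "reliability W R \<le> ereal (2 * \<rho> * V)"
proof (rule reliability_le[where N = "nat \<lceil>ln 2 / (R - V)\<rceil>" and g = "\<lambda>_. 2 * \<rho> * ln 2 + ln 4"])
  show "(\<lambda>n. (2 * \<rho> * ln 2 + ln 4) / real n) \<longlonglongrightarrow> 0" by (rule lim_const_over_n)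
  fix n :: nat assume nN: "nat \<lceil>ln 2 / (R - V)\<rceil> \<le> n" and n0: "0 < n"
  show "exp (- (real n * (2 * \<rho> * V) + (2 * \<rho> * ln 2 + ln 4))) \<le> opt_err W n R"
  proof (rule opt_err_ge[OF n0])
    fix M and c :: "nat \<Rightarrow> 'x list" and dec :: "'y list \<Rightarrow> nat"
    assume code: "is_code n M c dec" and rate: "R \<le> ln (real M) / real n"
    have big: "2 \<le> real M * exp (-V) ^ n" using big_from_rate[OF code n0 rate VR nN] .
    obtain m m' where mm: "m < M" "m' < M" "m \<noteq> m'"
      and B: "(exp (-V) ^ n / 2) powr \<rho> \<le> (\<Sum>ys\<in>Lst n. sqrt (Wn W (c m) ys * Wn W (c m') ys))"
      using code_bound1[OF ch rho orth uf ga code big] by blast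
    have "exp (- (real n * (2 * \<rho> * V) + (2 * \<rho> * ln 2 + ln 4))) = ((exp (-V) ^ n / 2) powr \<rho>)\<^sup>2 / 4"
      unfolding powr_form by (simp add: exp_diff exp_add power2_eq_square exp_minus field_simps flip: exp_add)
    also have "\<dots> \<le> (\<Sum>ys\<in>Lst n. sqrt (Wn W (c m) ys * Wn W (c m') ys))\<^sup>2 / 4"
      using B by (intro divide_right_mono power_mono) auto
    also have "\<dots> \<le> err_max W n M c dec" by (rule two_point_max[OF ch code mm])
    finally show "exp (- (real n * (2 * \<rho> * V) + (2 * \<rho> * ln 2 + ln 4))) \<le> err_max W n M c dec" .
  qed
qed



definition qq :: "('x \<Rightarrow> 'y::finite \<Rightarrow> real) \<Rightarrow> 'x \<Rightarrow> 'x \<Rightarrow> 'y \<Rightarrow> real" where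
  "qq W a b y = sqrt (W a y * W b y) / bhatt W a b"
definition ll :: "('x \<Rightarrow> 'y::finite \<Rightarrow> real) \<Rightarrow> 'x \<Rightarrow> 'x \<Rightarrow> 'y \<Rightarrow> real" where
  "ll W a b y = (if 0 < W a y \<and> 0 < W b y then ln (W a y) - ln (W b y) else 0)"
definition KK :: "('x::finite \<Rightarrow> 'y::finite \<Rightarrow> real) \<Rightarrow> real" where
  "KK W = 1 + (\<Sum>a\<in>UNIV. \<Sum>b\<in>UNIV. \<Sum>y\<in>UNIV. qq W a b y * (ll W a b y)\<^sup>2)"

lemma bhatt_nonneg: "channel W \<Longrightarrow> 0 \<le> bhatt W a b"
  unfolding bhatt_def channel_def by (auto intro!: sum_nonneg)

lemma qq_nonneg: "channel W \<Longrightarrow> 0 \<le> qq W a b y"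
  unfolding qq_def using bhatt_nonneg[of W a b] by (auto simp: channel_def)

lemma qq_sum: "0 < bhatt W a b \<Longrightarrow> (\<Sum>y\<in>UNIV. qq W a b y) = 1"
  unfolding qq_def by (simp add: sum_divide_distrib[symmetric] bhatt_def)

lemma KK_pos: "channel W \<Longrightarrow> 0 < KK W"
  unfolding KK_def by (intro add_pos_nonneg sum_nonneg mult_nonneg_nonneg qq_nonneg) auto

lemma KK_ge: "channel W \<Longrightarrow> (\<Sum>y\<in>UNIV. qq W a b y * (ll W a b y)\<^sup>2) \<le> KK W"
proof -
  assume ch: "channel W"
  let ?f = "\<lambda>a b. \<Sum>y\<in>UNIV. qq W a b y * (ll W a b y)\<^sup>2"
  have nn: "0 \<le> ?f a b" for a b by (intro sum_nonneg mult_nonneg_nonneg qq_nonneg ch) auto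
  have "?f a b \<le> (\<Sum>b'\<in>UNIV. ?f a b')" by (rule member_le_sum) (use nn in auto)
  also have "\<dots> \<le> (\<Sum>a'\<in>UNIV. \<Sum>b'\<in>UNIV. ?f a' b')"
    by (rule member_le_sum) (use nn in \<open>auto intro: sum_nonneg\<close>)
  finally show ?thesis unfolding KK_def by simp
qed

lemma term_deriv:
  assumes "0 < a" "0 < b"
  shows "((\<lambda>s. a powr (1-s) * b powr s) has_real_derivative (a powr (1-s) * b powr s) * (ln b - ln a)) (at s)"
proof -
  have eq: "(\<lambda>s. a powr (1-s) * b powr s) = (\<lambda>s. exp ((1-s) * ln a + s * ln b))"
    using assms by (auto simp: powr_def exp_add)
  have eq2: "a powr (1-s) * b powr s = exp ((1-s) * ln a + s * ln b)"
    using assms by (auto simp: powr_def exp_add)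
  have "((\<lambda>s. exp ((1-s) * ln a + s * ln b)) has_real_derivative exp ((1-s) * ln a + s * ln b) * (ln b - ln a)) (at s)"
    by (auto intro!: derivative_eq_intros simp: algebra_simps)
  then show ?thesis unfolding eq eq2 .
qed

lemma rev_mean_zero:
  assumes ch: "channel W" and rev: "pairwise_reversible W" and bpos: "0 < bhatt W a b"
  shows "(\<Sum>y\<in>UNIV. qq W a b y * ll W a b y) = 0"
proof -
  define d where "d y = (if 0 < W a y \<and> 0 < W b y then (W a y powr (1 - 1/2) * W b y powr (1/2)) * (ln (W b y) - ln (W a y)) else 0)" for y
  have D: "((\<lambda>s. chernoff W a b s) has_real_derivative (\<Sum>y\<in>UNIV. d y)) (at (1/2))"
    unfolding chernoff_def
  proof (rule DERIV_sum)
    fix y :: 'b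
    show "((\<lambda>s. W a y powr (1 - s) * W b y powr s) has_real_derivative d y) (at (1/2))"
    proof (cases "0 < W a y \<and> 0 < W b y")
      case True
      then show ?thesis unfolding d_def using term_deriv[of "W a y" "W b y" "1/2"] by simp
    next
      case False
      have nn: "0 \<le> W a y" "0 \<le> W b y" using ch unfolding channel_def by auto
      have "W a y = 0 \<or> W b y = 0" using False nn by linarith
      then have "(\<lambda>s. W a y powr (1 - s) * W b y powr s) = (\<lambda>_. 0)" by auto
      moreover have "d y = 0" unfolding d_def by (rule if_not_P[OF False])
      ultimately show ?thesis by simp
    qed
  qed
  have "(\<Sum>y\<in>UNIV. d y) = 0"
  proof (rule DERIV_local_min[OF D, of "1/2"])
    show "\<forall>s. \<bar>1/2 - s\<bar> < 1/2 \<longrightarrow> chernoff W a b (1/2) \<le> chernoff W a b s"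
    proof (intro allI impI)
      fix s :: real assume "\<bar>1/2 - s\<bar> < 1/2"
      then have "s \<in> {0..1}" unfolding atLeastAtMost_iff by (cases "s \<le> 1/2") (simp_all add: abs_if split: if_splits)
      then show "chernoff W a b (1/2) \<le> chernoff W a b s"
        using rev unfolding pairwise_reversible_def by blast
    qed
  qed simp
  moreover have "d y = - (bhatt W a b * (qq W a b y * ll W a b y))" for y
  proof (cases "0 < W a y \<and> 0 < W b y")
    case True
    then have "W a y powr (1 - 1/2) * W b y powr (1/2) = sqrt (W a y * W b y)"
      by (simp add: powr_half_sqrt real_sqrt_mult)
    then show ?thesis unfolding d_def qq_def ll_def using True bpos by (simp add: field_simps)
  next
    case False
    have "d y = 0" unfolding d_def by (rule if_not_P[OF False])
    moreover have "ll W a b y = 0" unfolding ll_def by (rule if_not_P[OF False])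
    ultimately show ?thesis by simp
  qed
  ultimately have "(\<Sum>y\<in>UNIV. - (bhatt W a b * (qq W a b y * ll W a b y))) = 0" by simp
  then have "bhatt W a b * (\<Sum>y\<in>UNIV. qq W a b y * ll W a b y) = 0"
    by (simp add: sum_negf sum_distrib_left)
  then show ?thesis using bpos by simp
qed

lemma letter_bound:
  assumes "0 \<le> A" "0 \<le> B"
  shows "A \<ge> sqrt (A * B) * exp ((if 0 < A \<and> 0 < B then ln A - ln B else 0) / 2)"
    and "B \<ge> sqrt (A * B) * exp (- (if 0 < A \<and> 0 < B then ln A - ln B else 0) / 2)"
proof -
  have key: "sqrt (A * B) * exp ((ln A - ln B) / 2) = A" "sqrt (A * B) * exp (-(ln A - ln B) / 2) = B"
    if "0 < A" "0 < B"
  proof -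
    have s: "sqrt (A * B) = exp ((ln A + ln B) / 2)"
    proof -
      have p: "0 < A * B" using that by simp
      have "sqrt (A * B) = exp (ln (sqrt (A * B)))" using p by simp
      also have "\<dots> = exp ((ln A + ln B) / 2)" using p that by (simp add: ln_sqrt ln_mult)
      finally show ?thesis .
    qed
    show "sqrt (A * B) * exp ((ln A - ln B) / 2) = A"
      unfolding s using that by (simp add: exp_add[symmetric] add_divide_distrib[symmetric])
    show "sqrt (A * B) * exp (-(ln A - ln B) / 2) = B"
      unfolding s using that by (simp add: exp_add[symmetric] add_divide_distrib[symmetric])
  qed
  show "A \<ge> sqrt (A * B) * exp ((if 0 < A \<and> 0 < B then ln A - ln B else 0) / 2)"
  proof (cases "0 < A \<and> 0 < B")
    case True then show ?thesis using key(1)[of] by simp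
  next
    case False
    then have "A = 0 \<or> B = 0" using assms by linarith
    then have z: "sqrt (A * B) = 0" by auto
    show ?thesis unfolding if_not_P[OF False] z using assms by simp
  qed
  show "B \<ge> sqrt (A * B) * exp (- (if 0 < A \<and> 0 < B then ln A - ln B else 0) / 2)"
  proof (cases "0 < A \<and> 0 < B")
    case True then show ?thesis using key(2)[of] by simp
  next
    case False
    then have "A = 0 \<or> B = 0" using assms by linarith
    then have z: "sqrt (A * B) = 0" by auto
    show ?thesis unfolding if_not_P[OF False] z using assms by simp
  qed
qed



lemma err_prob_if: "err_prob W n c dec m = (\<Sum>ys\<in>Lst n. if dec ys \<noteq> m then Wn W (c m) ys else 0)"
proof -
  have "{ys. length ys = n \<and> dec ys \<noteq> m} = {ys \<in> Lst n. dec ys \<noteq> m}" by (auto simp: Lst_def)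
  then show ?thesis unfolding err_prob_def by (simp add: sum.inter_filter)
qed

lemma rev_two_point:
  fixes W :: "'x::finite \<Rightarrow> 'y::finite \<Rightarrow> real"
  assumes ch: "channel W" and rev: "pairwise_reversible W" and code: "is_code n M c dec"
    and m: "m < M" "m' < M" "m \<noteq> m'" and n0: "0 < n"
    and Bpos: "0 < (\<Sum>ys\<in>Lst n. sqrt (Wn W (c m) ys * Wn W (c m') ys))"
  shows "(\<Sum>ys\<in>Lst n. sqrt (Wn W (c m) ys * Wn W (c m') ys)) * exp (- sqrt (2 * KK W * real n) / 2) / 4
          \<le> err_max W n M c dec"
proof -
  define xs where "xs = c m"
  define xs' where "xs' = c m'"
  define Bn where "Bn = (\<Sum>ys\<in>Lst n. sqrt (Wn W (c m) ys * Wn W (c m') ys))"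
  define P where "P = Wn W xs"
  define Q where "Q = Wn W xs'"
  have lens: "length xs = n" "length xs' = n" using code m unfolding is_code_def xs_def xs'_def by auto
  define ps where "ps = zip xs xs'"
  have lps: "length ps = n" unfolding ps_def using lens by simp
  have psi: "ps ! i = (xs!i, xs'!i)" if "i < n" for i unfolding ps_def using that lens by simp
  define q' where "q' = (\<lambda>(a,b) y. qq W a b y)"
  define l' where "l' = (\<lambda>(a,b) y. ll W a b y)"
  define Qn where "Qn = prodL q' ps"
  define Ln where "Ln = sumL l' ps"
  have Bprod: "Bn = (\<Prod>i<n. bhatt W (xs!i) (xs'!i))"
    unfolding Bn_def xs_def xs'_def by (subst bhatt_prod[OF lens[unfolded xs_def xs'_def], of W]) (rule refl)
  have bpos: "0 < bhatt W (xs!i) (xs'!i)" if "i < n" for i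
  proof -
    have "bhatt W (xs!i) (xs'!i) \<noteq> 0"
    proof
      assume "bhatt W (xs!i) (xs'!i) = 0"
      then have "(\<Prod>i<n. bhatt W (xs!i) (xs'!i)) = 0" using that by (intro prod_zero) auto
      then show False using Bpos Bprod Bn_def by linarith
    qed
    then show ?thesis using bhatt_nonneg[OF ch] by (simp add: less_le)
  qed
  have setps: "\<exists>i<n. p = (xs!i, xs'!i)" if "p \<in> set ps" for p
    using that unfolding in_set_conv_nth lps using psi by auto
  have q1: "(\<Sum>y\<in>UNIV. q' p y) = 1" if p_in: "p \<in> set ps" for p
  proof -
    obtain i where i: "i < n" "p = (xs!i, xs'!i)" using setps[OF p_in] by blast
    show ?thesis unfolding q'_def i(2) using qq_sum[OF bpos[OF i(1)]] by simp
  qed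
  have q0: "(\<Sum>y\<in>UNIV. q' p y * l' p y) = 0" if p_in: "p \<in> set ps" for p
  proof -
    obtain i where i: "i < n" "p = (xs!i, xs'!i)" using setps[OF p_in] by blast
    show ?thesis unfolding q'_def l'_def i(2) using rev_mean_zero[OF ch rev bpos[OF i(1)]] by simp
  qed
  have var: "(\<Sum>ys\<in>Lst n. Qn ys * (Ln ys)\<^sup>2) \<le> real n * KK W"
  proof -
    have "(\<Sum>ys\<in>Lst n. Qn ys * (Ln ys)\<^sup>2) = (\<Sum>i<n. \<Sum>y\<in>UNIV. q' (ps!i) y * (l' (ps!i) y)\<^sup>2)"
      using var_lemma[of ps q' l'] q1 q0 unfolding Qn_def Ln_def lps by blast
    also have "\<dots> \<le> (\<Sum>i<n. KK W)"
      by (intro sum_mono) (auto simp: psi q'_def l'_def intro: KK_ge[OF ch])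
    finally show ?thesis by simp
  qed
  have sQ: "(\<Sum>ys\<in>Lst n. Qn ys) = 1" unfolding Qn_def using sum_prodL[of ps q'] q1 lps by simp
  have Qnn: "0 \<le> Qn ys" for ys
    unfolding Qn_def prodL_def q'_def by (intro prod_nonneg) (auto simp: qq_nonneg[OF ch] split: prod.splits)
  have Wnn: "0 \<le> W a y" for a y using ch unfolding channel_def by auto
  have PQlow: "Bn * Qn ys * exp (Ln ys / 2) \<le> P ys \<and> Bn * Qn ys * exp (- Ln ys / 2) \<le> Q ys"
    if "ys \<in> Lst n" for ys
  proof -
    have sq: "sqrt (W (xs!i) (ys!i) * W (xs'!i) (ys!i)) = bhatt W (xs!i) (xs'!i) * q' (ps!i) (ys!i)"
      if "i < n" for i
      using bpos[OF that] psi[OF that] unfolding q'_def qq_def by simp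
    have lli: "l' (ps!i) (ys!i) = ll W (xs!i) (xs'!i) (ys!i)" if "i < n" for i
      using psi[OF that] unfolding l'_def by simp
    have e1: "(\<Prod>i<n. sqrt (W (xs!i) (ys!i) * W (xs'!i) (ys!i)) * exp (l' (ps!i) (ys!i) / 2))
        = Bn * Qn ys * exp (Ln ys / 2)"
    proof -
      have "(\<Prod>i<n. sqrt (W (xs!i) (ys!i) * W (xs'!i) (ys!i)) * exp (l' (ps!i) (ys!i) / 2))
          = (\<Prod>i<n. bhatt W (xs!i) (xs'!i) * q' (ps!i) (ys!i) * exp (l' (ps!i) (ys!i) / 2))"
        using sq by simp
      also have "\<dots> = Bn * Qn ys * (\<Prod>i<n. exp (l' (ps!i) (ys!i) / 2))"
        unfolding Bprod Qn_def prodL_def lps by (simp add: prod.distrib)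
      also have "(\<Prod>i<n. exp (l' (ps!i) (ys!i) / 2)) = exp (Ln ys / 2)"
        unfolding Ln_def sumL_def lps by (simp add: exp_sum sum_divide_distrib)
      finally show ?thesis .
    qed
    have e2: "(\<Prod>i<n. sqrt (W (xs!i) (ys!i) * W (xs'!i) (ys!i)) * exp (- l' (ps!i) (ys!i) / 2))
        = Bn * Qn ys * exp (- Ln ys / 2)"
    proof -
      have "(\<Prod>i<n. sqrt (W (xs!i) (ys!i) * W (xs'!i) (ys!i)) * exp (- l' (ps!i) (ys!i) / 2))
          = (\<Prod>i<n. bhatt W (xs!i) (xs'!i) * q' (ps!i) (ys!i) * exp (- l' (ps!i) (ys!i) / 2))"
        using sq by simp
      also have "\<dots> = Bn * Qn ys * (\<Prod>i<n. exp (- l' (ps!i) (ys!i) / 2))"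
        unfolding Bprod Qn_def prodL_def lps by (simp add: prod.distrib)
      also have "(\<Prod>i<n. exp (- l' (ps!i) (ys!i) / 2)) = exp (- Ln ys / 2)"
        unfolding Ln_def sumL_def lps by (simp add: exp_sum sum_divide_distrib sum_negf[symmetric])
      finally show ?thesis .
    qed
    have "(\<Prod>i<n. sqrt (W (xs!i) (ys!i) * W (xs'!i) (ys!i)) * exp (l' (ps!i) (ys!i) / 2)) \<le> P ys"
      unfolding P_def Wn_def lens(1)
    proof (intro prod_mono conjI mult_nonneg_nonneg real_sqrt_ge_zero Wnn)
      fix i assume "i \<in> {..<n}"
      then show "sqrt (W (xs!i) (ys!i) * W (xs'!i) (ys!i)) * exp (l' (ps!i) (ys!i) / 2) \<le> W (xs!i) (ys!i)"
        using letter_bound(1)[OF Wnn Wnn, of "xs!i" "ys!i" "xs'!i" "ys!i"] lli[of i]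
        unfolding ll_def by simp
    qed auto
    moreover have "(\<Prod>i<n. sqrt (W (xs!i) (ys!i) * W (xs'!i) (ys!i)) * exp (- l' (ps!i) (ys!i) / 2)) \<le> Q ys"
      unfolding Q_def Wn_def lens(2)
    proof (intro prod_mono conjI mult_nonneg_nonneg real_sqrt_ge_zero Wnn)
      fix i assume "i \<in> {..<n}"
      then show "sqrt (W (xs!i) (ys!i) * W (xs'!i) (ys!i)) * exp (- l' (ps!i) (ys!i) / 2) \<le> W (xs'!i) (ys!i)"
        using letter_bound(2)[OF Wnn Wnn, of "xs!i" "ys!i" "xs'!i" "ys!i"] lli[of i]
        unfolding ll_def by simp
    qed auto
    ultimately show ?thesis using e1 e2 by simp
  qed
  have Bnn: "0 \<le> Bn" using Bpos Bn_def by simp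
  have minlow: "Bn * (Qn ys * exp (- \<bar>Ln ys\<bar> / 2)) \<le> min (P ys) (Q ys)" if "ys \<in> Lst n" for ys
  proof -
    have "Bn * (Qn ys * exp (- \<bar>Ln ys\<bar> / 2)) \<le> Bn * Qn ys * exp (Ln ys / 2)"
      using Bnn Qnn[of ys] by (simp add: mult.assoc mult_left_mono)
    moreover have "Bn * (Qn ys * exp (- \<bar>Ln ys\<bar> / 2)) \<le> Bn * Qn ys * exp (- Ln ys / 2)"
      using Bnn Qnn[of ys] by (simp add: mult.assoc mult_left_mono)
    ultimately show ?thesis using PQlow[OF that] by simp
  qed
  define \<tau> where "\<tau> = sqrt (2 * KK W * real n)"
  have Kp: "0 < KK W" using KK_pos[OF ch] .
  have t2: "\<tau>\<^sup>2 = 2 * KK W * real n" unfolding \<tau>_def using Kp by simp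
  have tpos: "0 < \<tau>" unfolding \<tau>_def using Kp n0 by simp
  have pt: "exp (-\<tau>/2) * (Qn ys - Qn ys * (Ln ys)\<^sup>2 / \<tau>\<^sup>2) \<le> Qn ys * exp (- \<bar>Ln ys\<bar> / 2)" for ys
  proof (cases "\<bar>Ln ys\<bar> \<le> \<tau>")
    case True
    have "Qn ys - Qn ys * (Ln ys)\<^sup>2 / \<tau>\<^sup>2 \<le> Qn ys" using Qnn[of ys] by (simp add: divide_nonneg_nonneg)
    moreover have "exp (-\<tau>/2) \<le> exp (- \<bar>Ln ys\<bar> / 2)" using True by simp
    moreover have "Qn ys * (Ln ys)\<^sup>2 / \<tau>\<^sup>2 \<le> Qn ys"
    proof -
      have "\<bar>Ln ys\<bar>\<^sup>2 \<le> \<tau>\<^sup>2" using True by (intro power_mono) auto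
      then have "(Ln ys)\<^sup>2 / \<tau>\<^sup>2 \<le> 1" using tpos by simp
      then have "Qn ys * ((Ln ys)\<^sup>2 / \<tau>\<^sup>2) \<le> Qn ys * 1" using Qnn[of ys] by (intro mult_left_mono) auto
      then show ?thesis by simp
    qed
    ultimately have "exp (-\<tau>/2) * (Qn ys - Qn ys * (Ln ys)\<^sup>2 / \<tau>\<^sup>2) \<le> exp (- \<bar>Ln ys\<bar> / 2) * Qn ys"
      using Qnn[of ys] by (intro mult_mono) auto
    then show ?thesis by (simp add: mult.commute)
  next
    case False
    then have "\<tau>\<^sup>2 \<le> \<bar>Ln ys\<bar>\<^sup>2" using tpos by (intro power_mono) auto
    then have "\<tau>\<^sup>2 \<le> (Ln ys)\<^sup>2" by simp
    then have "1 \<le> (Ln ys)\<^sup>2 / \<tau>\<^sup>2" using tpos by simp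
    then have "Qn ys \<le> Qn ys * ((Ln ys)\<^sup>2 / \<tau>\<^sup>2)" using Qnn[of ys] mult_left_mono[of 1 "(Ln ys)\<^sup>2 / \<tau>\<^sup>2" "Qn ys"] by simp
    then have "Qn ys - Qn ys * (Ln ys)\<^sup>2 / \<tau>\<^sup>2 \<le> 0" by simp
    then have "exp (-\<tau>/2) * (Qn ys - Qn ys * (Ln ys)\<^sup>2 / \<tau>\<^sup>2) \<le> 0" by (simp add: mult_nonneg_nonpos)
    also have "0 \<le> Qn ys * exp (- \<bar>Ln ys\<bar> / 2)" using Qnn[of ys] by simp
    finally show ?thesis .
  qed
  have "Bn * exp (-\<tau>/2) / 2 = Bn * (exp (-\<tau>/2) * (1 - real n * KK W / \<tau>\<^sup>2))"
    unfolding t2 using Kp n0 by (simp add: field_simps)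
  also have "\<dots> \<le> Bn * (exp (-\<tau>/2) * ((\<Sum>ys\<in>Lst n. Qn ys) - (\<Sum>ys\<in>Lst n. Qn ys * (Ln ys)\<^sup>2) / \<tau>\<^sup>2))"
  proof -
    have "real n * KK W / \<tau>\<^sup>2 \<ge> (\<Sum>ys\<in>Lst n. Qn ys * (Ln ys)\<^sup>2) / \<tau>\<^sup>2"
      using var tpos by (intro divide_right_mono) auto
    then have "1 - real n * KK W / \<tau>\<^sup>2 \<le> 1 - (\<Sum>ys\<in>Lst n. Qn ys * (Ln ys)\<^sup>2) / \<tau>\<^sup>2" by linarith
    then show ?thesis unfolding sQ using Bnn by (intro mult_left_mono) auto
  qed
  also have "\<dots> = Bn * (\<Sum>ys\<in>Lst n. exp (-\<tau>/2) * (Qn ys - Qn ys * (Ln ys)\<^sup>2 / \<tau>\<^sup>2))"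
  proof -
    have "(\<Sum>ys\<in>Lst n. exp (-\<tau>/2) * (Qn ys - Qn ys * (Ln ys)\<^sup>2 / \<tau>\<^sup>2))
        = exp (-\<tau>/2) * (\<Sum>ys\<in>Lst n. (Qn ys - Qn ys * (Ln ys)\<^sup>2 / \<tau>\<^sup>2))"
      by (rule sum_distrib_left[symmetric])
    also have "(\<Sum>ys\<in>Lst n. (Qn ys - Qn ys * (Ln ys)\<^sup>2 / \<tau>\<^sup>2))
        = (\<Sum>ys\<in>Lst n. Qn ys) - (\<Sum>ys\<in>Lst n. Qn ys * (Ln ys)\<^sup>2) / \<tau>\<^sup>2"
      by (simp add: sum_subtractf sum_divide_distrib)
    finally show ?thesis by simp
  qed
  also have "\<dots> \<le> Bn * (\<Sum>ys\<in>Lst n. Qn ys * exp (- \<bar>Ln ys\<bar> / 2))"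
    using Bnn by (intro mult_left_mono sum_mono pt) auto
  also have "\<dots> = (\<Sum>ys\<in>Lst n. Bn * (Qn ys * exp (- \<bar>Ln ys\<bar> / 2)))" by (simp add: sum_distrib_left)
  also have "\<dots> \<le> (\<Sum>ys\<in>Lst n. min (P ys) (Q ys))" by (intro sum_mono minlow)
  also have "\<dots> \<le> (\<Sum>ys\<in>Lst n. (if dec ys \<noteq> m then P ys else 0) + (if dec ys \<noteq> m' then Q ys else 0))"
  proof (intro sum_mono)
    fix ys
    have "0 \<le> P ys" "0 \<le> Q ys" unfolding P_def Q_def using Wn_nonneg[OF ch] by auto
    then show "min (P ys) (Q ys) \<le> (if dec ys \<noteq> m then P ys else 0) + (if dec ys \<noteq> m' then Q ys else 0)"
      using m(3) by auto
  qed
  also have "\<dots> = err_prob W n c dec m + err_prob W n c dec m'"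
    unfolding err_prob_if sum.distrib P_def Q_def xs_def xs'_def ..
  also have "\<dots> \<le> 2 * err_max W n M c dec" using err_le_max[OF code m(1), where W=W] err_le_max[OF code m(2), where W=W] by simp
  finally show ?thesis unfolding Bn_def \<tau>_def by simp
qed


lemma g_lim:
  fixes C K :: real
  assumes "0 \<le> K"
  shows "(\<lambda>n. (C + sqrt (2 * K * real n) / 2) / real n) \<longlonglongrightarrow> 0"
proof -
  have eq: "(C + sqrt (2 * K * real n) / 2) / real n = C / real n + sqrt (2 * K) / 2 * inverse (sqrt (real n))" for n
  proof (cases "n = 0")
    case False
    have s: "sqrt (real n) * sqrt (real n) = real n" by simp
    have sp: "0 < sqrt (real n)" using False by simp
    have i: "inverse (sqrt (real n)) = sqrt (real n) / real n"
    proof -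
      have "sqrt (real n) / real n = sqrt (real n) / (sqrt (real n) * sqrt (real n))" by (simp only: s)
      also have "\<dots> = inverse (sqrt (real n))"
        by (simp only: divide_divide_eq_left[symmetric]) (simp add: sp divide_inverse)
      finally show ?thesis by simp
    qed
    have q: "sqrt (2 * K * real n) = sqrt (2 * K) * sqrt (real n)" by (simp add: real_sqrt_mult)
    show ?thesis unfolding i q using False by (simp add: add_divide_distrib)
  qed simp
  have "(\<lambda>n. C / real n + sqrt (2 * K) / 2 * inverse (sqrt (real n))) \<longlonglongrightarrow> 0 + sqrt (2 * K) / 2 * 0"
    by (intro tendsto_add tendsto_mult tendsto_const lim_const_over_n tendsto_inverse_0_at_top
        filterlim_compose[OF sqrt_at_top filterlim_real_sequentially])
  then show ?thesis unfolding eq by simp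
qed

lemma claim2_rep:
  fixes \<psi> :: "'x::finite \<Rightarrow> 'x \<Rightarrow> complex" and W :: "'x \<Rightarrow> 'y::finite \<Rightarrow> real"
  assumes ch: "channel W" and rev: "pairwise_reversible W" and rho: "1 \<le> \<rho>" and orth: "orth_rep W \<rho> \<psi>"
    and uf: "unit_vec f"
    and ga: "\<And>x. exp (-V) \<le> (cmod (cinner (\<psi> x) f))\<^sup>2" and VR: "V < R"
  shows "reliability W R \<le> ereal (\<rho> * V)"
proof (rule reliability_le[where N = "nat \<lceil>ln 2 / (R - V)\<rceil>" and g = "\<lambda>n. (\<rho> * ln 2 + ln 4) + sqrt (2 * KK W * real n) / 2"])
  show "(\<lambda>n. ((\<rho> * ln 2 + ln 4) + sqrt (2 * KK W * real n) / 2) / real n) \<longlonglongrightarrow> 0"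
    using g_lim KK_pos[OF ch] by (simp add: less_imp_le)
  fix n :: nat assume nN: "nat \<lceil>ln 2 / (R - V)\<rceil> \<le> n" and n0: "0 < n"
  show "exp (- (real n * (\<rho> * V) + ((\<rho> * ln 2 + ln 4) + sqrt (2 * KK W * real n) / 2))) \<le> opt_err W n R"
  proof (rule opt_err_ge[OF n0])
    fix M and c :: "nat \<Rightarrow> 'x list" and dec :: "'y list \<Rightarrow> nat"
    assume code: "is_code n M c dec" and rate: "R \<le> ln (real M) / real n"
    have big: "2 \<le> real M * exp (-V) ^ n" using big_from_rate[OF code n0 rate VR nN] .
    obtain m m' where mm: "m < M" "m' < M" "m \<noteq> m'"
      and B: "(exp (-V) ^ n / 2) powr \<rho> \<le> (\<Sum>ys\<in>Lst n. sqrt (Wn W (c m) ys * Wn W (c m') ys))"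
      using code_bound1[OF ch rho orth uf ga code big] by blast
    have Bpos: "0 < (\<Sum>ys\<in>Lst n. sqrt (Wn W (c m) ys * Wn W (c m') ys))"
      using B unfolding powr_form by (meson exp_gt_zero less_le_trans)
    have "exp (- (real n * (\<rho> * V) + ((\<rho> * ln 2 + ln 4) + sqrt (2 * KK W * real n) / 2)))
        = (exp (-V) ^ n / 2) powr \<rho> * exp (- sqrt (2 * KK W * real n) / 2) / 4"
    proof -
      have "- (real n * (\<rho> * V) + ((\<rho> * ln 2 + ln 4) + sqrt (2 * KK W * real n) / 2))
          = ((-(\<rho> * real n * V) - \<rho> * ln 2) + (- sqrt (2 * KK W * real n) / 2)) - ln 4"
        by (simp add: algebra_simps)
      then show ?thesis unfolding powr_form by (simp only: exp_diff exp_add exp_ln_iff) simp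
    qed
    also have "\<dots> \<le> (\<Sum>ys\<in>Lst n. sqrt (Wn W (c m) ys * Wn W (c m') ys)) * exp (- sqrt (2 * KK W * real n) / 2) / 4"
      using B by (intro divide_right_mono mult_right_mono) auto
    also have "\<dots> \<le> err_max W n M c dec" by (rule rev_two_point[OF ch rev code mm n0 Bpos])
    finally show "exp (- (real n * (\<rho> * V) + ((\<rho> * ln 2 + ln 4) + sqrt (2 * KK W * real n) / 2))) \<le> err_max W n M c dec" .
  qed
qed



lemma log_inv_lt:
  assumes "log_inv a < ereal t" "0 \<le> a"
  shows "exp (-t) \<le> a"
proof -
  have a0: "a \<noteq> 0" using assms(1) unfolding log_inv_def by auto
  then have apos: "0 < a" using assms(2) by simp
  have "ln (1 / a) < t" using assms(1) a0 unfolding log_inv_def by simp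
  then have "- t < ln a" using apos by (simp add: ln_div)
  then have "exp (-t) < exp (ln a)" by simp
  then show ?thesis using apos by simp
qed

lemma cinner_le1:
  assumes "unit_vec u" "unit_vec v"
  shows "(cmod (cinner u v))\<^sup>2 \<le> 1"
  using cs_complex[of u v UNIV] assms unfolding cinner_def unit_vec_def by simp

lemma log_inv_nonneg: "0 \<le> a \<Longrightarrow> a \<le> 1 \<Longrightarrow> 0 \<le> log_inv a"
  unfolding log_inv_def by simp

lemma theta_nonneg:
  fixes W :: "'x::finite \<Rightarrow> 'y::finite \<Rightarrow> real"
  shows "0 \<le> theta W \<rho>"
  unfolding theta_def
proof (rule INF_greatest)
  fix \<psi> :: "'x \<Rightarrow> 'x \<Rightarrow> complex" assume "\<psi> \<in> {\<psi>. orth_rep W \<rho> \<psi>}"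
  then have u: "\<And>x. unit_vec (\<psi> x)" unfolding orth_rep_def by auto
  show "0 \<le> Vval \<psi>" unfolding Vval_def
  proof (rule INF_greatest)
    fix f :: "'x \<Rightarrow> complex" assume "f \<in> {f. unit_vec f}"
    then have "0 \<le> log_inv ((cmod (cinner (\<psi> undefined) f))\<^sup>2)"
      using u cinner_le1 by (intro log_inv_nonneg) auto
    also have "\<dots> \<le> (SUP x. log_inv ((cmod (cinner (\<psi> x) f))\<^sup>2))" by (rule SUP_upper) simp
    finally show "0 \<le> (SUP x. log_inv ((cmod (cinner (\<psi> x) f))\<^sup>2))" .
  qed
qed

lemma claim_gen:
  fixes W :: "'x::finite \<Rightarrow> 'y::finite \<Rightarrow> real"
  assumes k: "0 < k" and th: "theta W \<rho> < ereal R"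
    and H: "\<And>(\<psi> :: 'x \<Rightarrow> 'x \<Rightarrow> complex) f V. orth_rep W \<rho> \<psi> \<Longrightarrow> unit_vec f \<Longrightarrow>
              (\<And>x. exp (-V) \<le> (cmod (cinner (\<psi> x) f))\<^sup>2) \<Longrightarrow> V < R \<Longrightarrow> E \<le> ereal (k * V)"
  shows "E \<le> ereal k * theta W \<rho>"
proof -
  have t0: "0 \<le> theta W \<rho>" by (rule theta_nonneg)
  obtain tr where tr: "theta W \<rho> = ereal tr" using t0 th by (cases "theta W \<rho>") auto
  have trR: "tr < R" using th tr by simp
  have "E \<le> ereal (k * tr)"
  proof (rule dense_ge_bounded[of _ "ereal (k * R)"])
    show "ereal (k * tr) < ereal (k * R)" using trR k by simp
    fix w assume w1: "ereal (k * tr) < w" and w2: "w < ereal (k * R)"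
    obtain w' where w': "w = ereal w'" using w1 w2 by (cases w) auto
    define t where "t = w' / k"
    have tt: "tr < t" "t < R" using w1 w2 k unfolding w' t_def by (auto simp: field_simps)
    have "theta W \<rho> < ereal t" using tt tr by simp
    then obtain \<psi> where orth: "orth_rep W \<rho> \<psi>" and Vt: "Vval \<psi> < ereal t"
      unfolding theta_def INF_less_iff by auto
    then obtain f where uf: "unit_vec f" and St: "(SUP x. log_inv ((cmod (cinner (\<psi> x) f))\<^sup>2)) < ereal t"
      unfolding Vval_def INF_less_iff by auto
    have ga: "exp (-t) \<le> (cmod (cinner (\<psi> x) f))\<^sup>2" for x
    proof (rule log_inv_lt)
      have "log_inv ((cmod (cinner (\<psi> x) f))\<^sup>2) \<le> (SUP x. log_inv ((cmod (cinner (\<psi> x) f))\<^sup>2))"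
        by (rule SUP_upper) simp
      then show "log_inv ((cmod (cinner (\<psi> x) f))\<^sup>2) < ereal t" using St by simp
    qed simp
    have "E \<le> ereal (k * t)" using H[OF orth uf ga tt(2)] .
    also have "k * t = w'" unfolding t_def using k by simp
    finally show "E \<le> w" unfolding w' .
  qed
  then show ?thesis unfolding tr by simp
qed

theorem corollary1:
  fixes W :: "'x::finite \<Rightarrow> 'y::finite \<Rightarrow> real" and \<rho> :: real
  assumes "channel W" and "1 \<le> \<rho>"
  shows "(\<forall>R. ereal R > theta W \<rho> \<longrightarrow> reliability W R \<le> ereal (2 * \<rho>) * theta W \<rho>) \<and>
         (pairwise_reversible W \<longrightarrow>
            (\<forall>R. ereal R > theta W \<rho> \<longrightarrow> reliability W R \<le> ereal \<rho> * theta W \<rho>))"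
proof (intro conjI allI impI)
  fix R assume th: "ereal R > theta W \<rho>"
  show "reliability W R \<le> ereal (2 * \<rho>) * theta W \<rho>"
  proof (rule claim_gen)
    show "0 < 2 * \<rho>" using assms(2) by simp
    show "theta W \<rho> < ereal R" using th .
    fix \<psi> :: "'x \<Rightarrow> 'x \<Rightarrow> complex" and f V
    assume "orth_rep W \<rho> \<psi>" "unit_vec f" "\<And>x. exp (-V) \<le> (cmod (cinner (\<psi> x) f))\<^sup>2" "V < R"
    then show "reliability W R \<le> ereal (2 * \<rho> * V)" using claim1_rep[OF assms] by blast
  qed
next
  fix R assume rev: "pairwise_reversible W" and th: "ereal R > theta W \<rho>"
  show "reliability W R \<le> ereal \<rho> * theta W \<rho>"
  proof (rule claim_gen)
    show "0 < \<rho>" using assms(2) by simp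
    show "theta W \<rho> < ereal R" using th .
    fix \<psi> :: "'x \<Rightarrow> 'x \<Rightarrow> complex" and f V
    assume "orth_rep W \<rho> \<psi>" "unit_vec f" "\<And>x. exp (-V) \<le> (cmod (cinner (\<psi> x) f))\<^sup>2" "V < R"
    then show "reliability W R \<le> ereal (\<rho> * V)" using claim2_rep[OF assms(1) rev assms(2)] by blast
  qed
qed


end
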